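(* Let $m\in\{2,3,4,\dots\}$, $R>0$, and let $w\in C^1((0,\infty))$ with $w(y)>0$ for $y\ge R$. Define, for $r,t>0$ and $0\le\eta,\xi\le1$, $$K(r,t,\eta,\xi)=\frac{(r+t\eta-2t\eta\xi)^m}{\sqrt{r+t\eta-t\eta\xi}\,\sqrt{r-\xi t\eta}},\qquad \Theta(r,t,\eta,\xi)=\frac{(r+t\eta-2t\eta\xi)^2+r^2-t^2\eta^2}{2r(r+t\eta-2t\eta\xi)}.$$ Then for all $0\le\xi,\eta\le1$ and $(r,t)\in\Sigma_1:=\{(r,t)\in(0,\infty)^2: r-t\ge\max\{R,\delta t\}>0\}$, $$\frac{\partial}{\partial t}\Big\{K(r,t,\eta,\xi)\,w(r+t\eta-2t\eta\xi)\,T_{m-1}(\Theta(r,t,\eta,\xi))\Big\}\ge-\Big\{E_m\frac{w(r+t\eta-2t\eta\xi)}{r+t\eta-2t\eta\xi}+|w'(r+t\eta-2t\eta\xi)|\Big\}K(r,t,\eta,\xi),$$ where $E_m=m+\frac18+\frac{5\zeta_m(m-1)^2}{3}$.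
   Context: $T_{m-1}$ is the Chebyshev polynomial $T_k(z)=\frac{(-1)^k}{(2k-1)!!}(1-z^2)^{1/2}\frac{d^k}{dz^k}(1-z^2)^{k-1/2}$ with $k=m-1$. $\zeta_m\in(0,1]$ is a fixed constant depending only on $m$ such that $\frac12\le T_{m-1}(z)\le1$ and $0<T'_{m-1}(z)\le(m-1)^2$ for $\frac1{1+\zeta_m}\le z\le1$; $\eta_m\in(0,1]$ is a fixed constant depending only on $m$ such that the Legendre polynomial $P_{m-1}(z)=\frac{1}{2^{m-1}(m-1)!}\frac{d^{m-1}}{dz^{m-1}}(z^2-1)^{m-1}$ satisfies $P_{m-1}(z)\ge\frac12$ and $0<P'_{m-1}(z)\le\frac12m(m-1)$ for $\frac1{1+\eta_m}\le z\le1$; and $\delta=\max\{2/\eta_m,2/\zeta_m\}$. *)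

theory Defs
  imports "HOL-Analysis.Analysis" "HOL-Computational_Algebra.Polynomial"
begin

text \<open>Chebyshev polynomials of the first kind, via the standard three-term recurrence
  (equivalent to the Rodrigues-type formula in the paper).\<close>
fun chebyshev_poly :: "nat \<Rightarrow> real poly" where
  "chebyshev_poly 0 = 1"
| "chebyshev_poly (Suc 0) = [:0, 1:]"
| "chebyshev_poly (Suc (Suc k)) = [:0, 2:] * chebyshev_poly (Suc k) - chebyshev_poly k"

definition chebT :: "nat \<Rightarrow> real \<Rightarrow> real" where
  "chebT k z = poly (chebyshev_poly k) z"

definition chebT' :: "nat \<Rightarrow> real \<Rightarrow> real" where
  "chebT' k z = poly (pderiv (chebyshev_poly k)) z"

definition legendre_poly :: "nat \<Rightarrow> real poly" where
  "legendre_poly n = smult (1 / (2 ^ n * fact n)) ((pderiv ^^ n) ([:-1, 0, 1:] ^ n))"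

definition legP :: "nat \<Rightarrow> real \<Rightarrow> real" where
  "legP n z = poly (legendre_poly n) z"

definition legP' :: "nat \<Rightarrow> real \<Rightarrow> real" where
  "legP' n z = poly (pderiv (legendre_poly n)) z"

definition kerK :: "nat \<Rightarrow> real \<Rightarrow> real \<Rightarrow> real \<Rightarrow> real \<Rightarrow> real" where
  "kerK m r t \<eta> \<xi> = (r + t*\<eta> - 2*t*\<eta>*\<xi>) ^ m /
      (sqrt (r + t*\<eta> - t*\<eta>*\<xi>) * sqrt (r - \<xi>*t*\<eta>))"

definition Theta :: "real \<Rightarrow> real \<Rightarrow> real \<Rightarrow> real \<Rightarrow> real" where
  "Theta r t \<eta> \<xi> = ((r + t*\<eta> - 2*t*\<eta>*\<xi>)^2 + r^2 - t^2*\<eta>^2) /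
      (2*r*(r + t*\<eta> - 2*t*\<eta>*\<xi>))"

definition E_const :: "nat \<Rightarrow> real \<Rightarrow> real" where
  "E_const m \<zeta> = real m + 1/8 + 5 * \<zeta> * (real m - 1)^2 / 3"

end

theory Submission
  imports Defs
begin
lemma auxK: "sa > 0 \<Longrightarrow> sb > 0 \<Longrightarrow> (y::real) > 0 \<Longrightarrow> (real m * p * y' * (sa * sb) -
      y * p * (inverse sa / 2 * a' * sb + inverse sb / 2 * b' * sa)) /
     (sa * sb * (sa * sb)) =
     y * p / (sa * sb) * (real m * y' / y - (a' / (sa * sa) + b' / (sb * sb)) / 2)"
  by (simp add: field_simps inverse_eq_divide)

lemma auxTh: assumes "Y = r + t*\<eta> - 2*t*\<eta>*\<xi>" "(Y::real) \<noteq> 0" "r \<noteq> 0"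
  shows "((2*((\<eta> - 2*\<eta>*\<xi>)*Y) - 2*t*\<eta>^2)*(2*r*Y) - (Y^2 + r^2 - t^2*\<eta>^2)*((\<eta> - 2*\<eta>*\<xi>)*(2*r)))/(2*r*Y*(2*r*Y))
   = -(4*\<xi>*(1-\<xi>)*\<eta>*(t*\<eta>)*(2*Y - t*\<eta>*(1-2*\<xi>)))/(2*r*Y^2)"
proof -
  have "((2*((\<eta> - 2*\<eta>*\<xi>)*Y) - 2*t*\<eta>^2)*(2*r*Y) - (Y^2 + r^2 - t^2*\<eta>^2)*((\<eta> - 2*\<eta>*\<xi>)*(2*r)))
     = -(4*\<xi>*(1-\<xi>)*\<eta>*(t*\<eta>)*(2*Y - t*\<eta>*(1-2*\<xi>))) * (2*r)"
    unfolding assms(1) by (simp add: algebra_simps power2_eq_square)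
  thus ?thesis using assms(2,3) by (simp add: power2_eq_square)
qed

lemma dK:
  fixes m :: nat and Y A B :: "real \<Rightarrow> real" and t y' a' b' :: real
  assumes m: "m \<ge> 1"
  and dY: "(Y has_real_derivative y') (at t)"
  and dA: "(A has_real_derivative a') (at t)"
  and dB: "(B has_real_derivative b') (at t)"
  and pos: "Y t > 0" "A t > 0" "B t > 0"
  shows "((\<lambda>\<tau>. Y \<tau> ^ m / (sqrt (A \<tau>) * sqrt (B \<tau>))) has_real_derivative
     (Y t ^ m / (sqrt (A t) * sqrt (B t))) * (m * y' / Y t - (a' / A t + b' / B t) / 2)) (at t)"
proof -
  have d1: "((\<lambda>\<tau>. Y \<tau> ^ m) has_real_derivative of_nat m * Y t ^ (m - 1) * y') (at t)"
    using DERIV_chain2[OF DERIV_pow dY, of m] by simp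
  have dsA: "((\<lambda>\<tau>. sqrt (A \<tau>)) has_real_derivative inverse (sqrt (A t)) / 2 * a') (at t)"
    by (rule DERIV_chain2[OF DERIV_real_sqrt[OF pos(2)] dA])
  have dsB: "((\<lambda>\<tau>. sqrt (B \<tau>)) has_real_derivative inverse (sqrt (B t)) / 2 * b') (at t)"
    by (rule DERIV_chain2[OF DERIV_real_sqrt[OF pos(3)] dB])
  note d2 = DERIV_divide[OF d1 DERIV_mult[OF dsA dsB]]
  define sa where "sa = sqrt (A t)"
  define sb where "sb = sqrt (B t)"
  have sa: "sa > 0" "A t = sa * sa" using pos by (auto simp: sa_def)
  have sb: "sb > 0" "B t = sb * sb" using pos by (auto simp: sb_def)
  have ym: "Y t ^ m = Y t * Y t ^ (m - 1)" using m by (cases m) auto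
  have eq: "(sa * (sb * (y' * (real m * p))) - (a' * (sb * (y * p)) / (sa * 2) + b' * (sa * (y * p)) / (sb * 2))) / (sa * (sa * (sb * sb)))
     = (y * p) / (sa * sb) * (real m * y' / y - (a' / (sa * sa) + b' / (sb * sb)) / 2)" if "y > 0" for y p
    using that sa sb by (simp add: field_simps inverse_eq_divide)
  show ?thesis
    apply (rule DERIV_cong[OF d2])
    unfolding sa_def[symmetric] sb_def[symmetric]
    unfolding sa(2) sb(2) ym
    using sa(1) sb(1) apply simp
    by (rule auxK[OF sa(1) sb(1) pos(1)])
qed
theorem proposition5p2:
  fixes m :: nat and R \<zeta> \<eta>m \<delta> :: real and w w' :: "real \<Rightarrow> real"
    and r t \<eta> \<xi> :: real
  assumes m: "m \<ge> 2"
    and R: "R > 0"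
    and w_deriv: "\<And>y. y > 0 \<Longrightarrow> (w has_real_derivative w' y) (at y)"
    and w'_cont: "continuous_on {0<..} w'"
    and w_pos: "\<And>y. y \<ge> R \<Longrightarrow> w y > 0"
    and \<zeta>: "0 < \<zeta>" "\<zeta> \<le> 1"
    and \<zeta>_prop: "\<And>z. 1 / (1 + \<zeta>) \<le> z \<Longrightarrow> z \<le> 1 \<Longrightarrow>
         1/2 \<le> chebT (m - 1) z \<and> chebT (m - 1) z \<le> 1 \<and>
         0 < chebT' (m - 1) z \<and> chebT' (m - 1) z \<le> (real m - 1)^2"
    and \<eta>m: "0 < \<eta>m" "\<eta>m \<le> 1"
    and \<eta>m_prop: "\<And>z. 1 / (1 + \<eta>m) \<le> z \<Longrightarrow> z \<le> 1 \<Longrightarrow>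
         1/2 \<le> legP (m - 1) z \<and>
         0 < legP' (m - 1) z \<and> legP' (m - 1) z \<le> real m * (real m - 1) / 2"
    and \<delta>: "\<delta> = max (2 / \<eta>m) (2 / \<zeta>)"
    and \<xi>: "0 \<le> \<xi>" "\<xi> \<le> 1"
    and \<eta>: "0 \<le> \<eta>" "\<eta> \<le> 1"
    and rt: "r > 0" "t > 0" "r - t \<ge> max R (\<delta> * t)" "max R (\<delta> * t) > 0"
  shows "\<exists>D. ((\<lambda>\<tau>. kerK m r \<tau> \<eta> \<xi> * w (r + \<tau>*\<eta> - 2*\<tau>*\<eta>*\<xi>) * chebT (m - 1) (Theta r \<tau> \<eta> \<xi>))
              has_real_derivative D) (at t) \<and>
            D \<ge> - (E_const m \<zeta> * w (r + t*\<eta> - 2*t*\<eta>*\<xi>) / (r + t*\<eta> - 2*t*\<eta>*\<xi>)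
                   + \<bar>w' (r + t*\<eta> - 2*t*\<eta>*\<xi>)\<bar>) * kerK m r t \<eta> \<xi>"
proof -
  define c where "c = 1 - 2*\<xi>"
  define q where "q = 4*\<xi>*(1-\<xi>)"
  define u where "u = t*\<eta>"
  define y where "y = r + t*\<eta> - 2*t*\<eta>*\<xi>"
  define a where "a = r + t*\<eta> - t*\<eta>*\<xi>"
  define b where "b = r - \<xi>*t*\<eta>"
  have \<delta>\<zeta>: "\<delta> \<ge> 2/\<zeta>" using \<delta> by simp
  have zt: "\<zeta>*(r-t) \<ge> 2*t"
  proof -
    have "\<delta>*t \<ge> 2/\<zeta>*t" using mult_right_mono[OF \<delta>\<zeta>, of t] rt(2) by simp
    hence "r - t \<ge> 2/\<zeta>*t" using rt(3) by simp
    hence "\<zeta>*(r-t) \<ge> \<zeta>*(2/\<zeta>*t)" using \<zeta>(1) by (intro mult_left_mono) auto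
    thus ?thesis using \<zeta>(1) by simp
  qed
  have rtR: "r - t \<ge> R" using rt(3) by simp
  have u0: "0 \<le> u" "u \<le> t" using \<eta> rt(2) by (auto simp: u_def mult_left_le)
  have yu: "y = r + u*c" by (simp add: y_def u_def c_def algebra_simps)
  have c1: "-1 \<le> c" "c \<le> 1" using \<xi> by (auto simp: c_def)
  have q3: "q = 1 - c^2" unfolding q_def c_def by (simp add: power2_eq_square algebra_simps)
  have "c^2 \<le> 1" using c1 by (simp add: abs_square_le_1)
  hence q1: "0 \<le> q" "q \<le> 1" "q = 1 - c^2" using \<xi> q3 unfolding q_def
    by (auto intro!: mult_nonneg_nonneg)
  have yge: "y \<ge> r - t"
  proof -
    have "u*c \<ge> u*(-1)" by (rule mult_left_mono[OF c1(1) u0(1)])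
    thus ?thesis using yu u0 by simp
  qed
  have ypos: "y > 0" "y \<ge> R" using yge rtR R by auto
  have xu: "0 \<le> \<xi>*u" "\<xi>*u \<le> u" using \<xi> u0 by (auto simp: mult_left_le_one_le)
  have abu: "b = r - \<xi>*u" "a = r + u - \<xi>*u" "y = r + u - 2*(\<xi>*u)"
    by (simp_all add: a_def b_def y_def u_def algebra_simps)
  have ab: "b \<le> a" "y \<le> a" "b > 0" "a > 0"
    using u0 xu abu rt(2) rtR R by auto
  have yt: "r + t*\<eta> - 2*t*\<eta>*\<xi> = y" by (simp add: y_def)
  have dY: "((\<lambda>\<tau>. r + \<tau>*\<eta> - 2*\<tau>*\<eta>*\<xi>) has_real_derivative (\<eta> - 2*\<eta>*\<xi>)) (at t)"
    by (auto intro!: derivative_eq_intros)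
  have dA: "((\<lambda>\<tau>. r + \<tau>*\<eta> - \<tau>*\<eta>*\<xi>) has_real_derivative (\<eta> - \<eta>*\<xi>)) (at t)"
    by (auto intro!: derivative_eq_intros)
  have dB: "((\<lambda>\<tau>. r - \<xi>*\<tau>*\<eta>) has_real_derivative (- \<xi>*\<eta>)) (at t)"
    by (auto intro!: derivative_eq_intros)
  have dN: "((\<lambda>\<tau>. (r + \<tau>*\<eta> - 2*\<tau>*\<eta>*\<xi>)^2 + r^2 - \<tau>^2*\<eta>^2) has_real_derivative
       2*((\<eta> - 2*\<eta>*\<xi>)*y) - 2*t*\<eta>^2) (at t)"
    unfolding y_def by (auto intro!: derivative_eq_intros)
  have dDen: "((\<lambda>\<tau>. 2*r*(r + \<tau>*\<eta> - 2*\<tau>*\<eta>*\<xi>)) has_real_derivative (\<eta> - 2*\<eta>*\<xi>)*(2*r)) (at t)"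
    by (auto intro!: derivative_eq_intros)
  note dTh0 = DERIV_divide[OF dN dDen]
  have dTh: "((\<lambda>\<tau>. Theta r \<tau> \<eta> \<xi>) has_real_derivative (-(q*\<eta>*u*(2*y - u*c))/(2*r*y^2))) (at t)"
    unfolding Theta_def
    apply (rule DERIV_cong[OF dTh0])
    using ypos rt(1) apply (simp add: yt)
    unfolding yt q_def u_def c_def
    by (rule auxTh[OF y_def]) (use ypos rt(1) in auto)
  have rtt: "r - t \<ge> 2*t"
  proof -
    have "\<zeta>*(r-t) \<le> r - t" using \<zeta> rtR R by (simp add: mult_left_le_one_le)
    thus ?thesis using zt by linarith
  qed
  have yt2: "y \<ge> t" using yge rtt rt(2) by linarith
  have zry: "\<zeta>*r*y \<ge> 2*t*y"
  proof -
    have "\<zeta>*r \<ge> 2*t" using zt \<zeta> rt(2) by (simp add: algebra_simps) (smt (verit) mult_pos_pos)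
    thus ?thesis using ypos(1) by (simp add: mult_right_mono)
  qed
  have tty: "t*t \<le> t*y" using yt2 rt(2) by (simp add: mult_left_mono)
  have ThV: "Theta r t \<eta> \<xi> = 1 - u^2*q/(2*r*y)"
  proof -
    have "y^2 + r^2 - t^2*\<eta>^2 = 2*r*y - u^2*q"
      unfolding yu q1(3) u_def by (simp add: algebra_simps power2_eq_square)
    thus ?thesis unfolding Theta_def yt using ypos(1) rt(1) by (simp add: field_simps)
  qed
  have uq: "u^2*q \<le> t^2"
  proof -
    have "u^2 \<le> t^2" using u0 by (simp add: power_mono)
    moreover have "u^2*q \<le> u^2" using mult_left_le[OF q1(2), of "u^2"] q1(1) by simp
    ultimately show ?thesis by linarith
  qed
  have Threl: "u^2*q/(2*r*y) \<le> \<zeta>/(1+\<zeta>)"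
  proof -
    have "u^2*q/(2*r*y) \<le> t^2/(2*r*y)" using uq ypos rt(1) by (simp add: divide_right_mono)
    also have "\<dots> \<le> \<zeta>/4"
    proof -
      have "2*(t*t) \<le> \<zeta>*(r*y)" using zry tty by (simp only: mult.assoc)
      thus ?thesis using ypos rt(1) by (simp add: divide_simps power2_eq_square)
    qed
    also have "\<dots> \<le> \<zeta>/(1+\<zeta>)" using \<zeta> by (simp add: divide_simps)
    finally show ?thesis .
  qed
  have ThR: "1/(1+\<zeta>) \<le> Theta r t \<eta> \<xi>" "Theta r t \<eta> \<xi> \<le> 1"
  proof -
    have "1/(1+\<zeta>) = 1 - \<zeta>/(1+\<zeta>)" using \<zeta> by (simp add: field_simps)
    thus "1/(1+\<zeta>) \<le> Theta r t \<eta> \<xi>" using ThV Threl by linarith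
    have "u^2*q/(2*r*y) \<ge> 0" using q1 ypos rt(1) by simp
    thus "Theta r t \<eta> \<xi> \<le> 1" using ThV by linarith
  qed
  define Tv where "Tv = chebT (m - 1) (Theta r t \<eta> \<xi>)"
  define Td where "Td = chebT' (m - 1) (Theta r t \<eta> \<xi>)"
  have T: "1/2 \<le> Tv" "Tv \<le> 1" "0 < Td" "Td \<le> (real m - 1)^2"
    using \<zeta>_prop[OF ThR] unfolding Tv_def Td_def by auto
  define yd where "yd = \<eta> - 2*\<eta>*\<xi>"
  define Bk where "Bk = real m * yd / y - ((\<eta> - \<eta>*\<xi>)/a + (- \<xi>*\<eta>)/b)/2"
  define Thd where "Thd = -(q*\<eta>*u*(2*y - u*c))/(2*r*y^2)"
  have ydc: "yd = \<eta>*c" by (simp add: yd_def c_def algebra_simps)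
  have ydb: "-1 \<le> yd" "yd \<le> 1"
  proof -
    have "\<bar>yd\<bar> \<le> 1" unfolding ydc abs_mult using \<eta> c1 by (intro mult_le_one) auto
    thus "-1 \<le> yd" "yd \<le> 1" by auto
  qed
  have m1: "real m \<ge> 1" using m by simp
  have ab_le: "(\<eta> - \<eta>*\<xi>)/a + (- \<xi>*\<eta>)/b \<le> yd/a"
  proof -
    have "\<xi>*\<eta>/a \<le> \<xi>*\<eta>/b" using ab \<xi> \<eta> by (intro divide_left_mono) auto
    moreover have "(\<eta> - \<eta>*\<xi>)/a = \<eta>/a - \<xi>*\<eta>/a" "yd/a = \<eta>/a - 2*(\<xi>*\<eta>/a)"
      "(- \<xi>*\<eta>)/b = - (\<xi>*\<eta>/b)"
      unfolding yd_def by (simp_all add: diff_divide_distrib mult.commute)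
    ultimately show ?thesis by linarith
  qed
  have TB: "Tv*Bk \<ge> - real m / y"
  proof (cases "yd \<ge> 0")
    case True
    have "yd/a \<le> yd/y" using True ab ypos by (intro divide_left_mono) auto
    also have "\<dots> \<le> real m * yd / y" using True m1 ypos by (simp add: divide_right_mono mult_le_cancel_right1)
    finally have "Bk \<ge> 0" unfolding Bk_def using ab_le divide_nonneg_pos[OF True ab(4)] by argo
    hence "Tv*Bk \<ge> 0" using T by simp
    moreover have "- real m / y \<le> 0" using ypos by simp
    ultimately show ?thesis by linarith
  next
    case False
    have "yd/a \<le> 0" using False ab by (simp add: divide_nonpos_pos)
    hence Bk1: "Bk \<ge> real m * yd / y" unfolding Bk_def using ab_le by argo
    have "real m * (-1) \<le> real m * yd" by (rule mult_left_mono[OF ydb(1)]) simp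
    hence "real m * yd \<ge> - real m" by simp
    hence "(- real m) / y \<le> real m * yd / y" using ypos by (intro divide_right_mono) auto
    hence Bk2: "real m * yd / y \<ge> - real m / y" by simp
    show ?thesis
    proof (cases "Bk \<ge> 0")
      case True
      hence "Tv*Bk \<ge> 0" using T by simp
      moreover have "- real m / y \<le> 0" using ypos by simp
      ultimately show ?thesis by linarith
    next
      case False
      hence "Bk*Tv \<ge> Bk*1" using T by (intro mult_left_mono_neg) auto
      hence "Tv*Bk \<ge> Bk" by (simp add: mult.commute)
      thus ?thesis using Bk1 Bk2 by linarith
    qed
  qed
  have Thdb: "Thd \<ge> - (5*\<zeta>/3)/y"
  proof -
    have uc: "\<bar>u*c\<bar> \<le> u" using u0 c1 by (simp add: abs_mult mult_left_le)
    have qe: "0 \<le> q*\<eta>" "q*\<eta> \<le> 1" using q1 \<eta> by (auto intro: mult_le_one)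
    have "u*c \<le> 2*y" using uc u0 yt2 by linarith
    hence p0: "0 \<le> u*(2*y - u*c)" using u0 by simp
    have "q*\<eta>*u*(2*y - u*c) = (q*\<eta>)*(u*(2*y - u*c))" by simp
    also have "\<dots> \<le> u*(2*y - u*c)" using qe p0 by (simp add: mult_left_le_one_le)
    also have "\<dots> \<le> u*(2*y + u)" using uc u0 by (intro mult_left_mono) auto
    also have "\<dots> \<le> t*(2*y + t)" using u0 ypos by (intro mult_mono) auto
    finally have n1: "q*\<eta>*u*(2*y - u*c) \<le> t*(2*y + t)" .
    have n2: "3*(t*(2*y+t)) \<le> 10*(\<zeta>*(r*y))"
    proof -
      have e: "3*(t*(2*y+t)) = 6*(t*y) + 3*(t*t)" by (simp add: algebra_simps)
      have "2*(t*y) \<le> \<zeta>*(r*y)" using zry by (simp only: mult.assoc)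
      moreover have "0 \<le> t*y" using rt(2) ypos by simp
      ultimately show ?thesis unfolding e using tty by linarith
    qed
    have "q*\<eta>*u*(2*y - u*c)/(2*r*y^2) \<le> (5*\<zeta>/3)/y"
    proof -
      have d0: "0 < 2*r*y^2" using ypos rt(1) by simp
      have "q*\<eta>*u*(2*y - u*c)/(2*r*y^2) \<le> t*(2*y + t)/(2*r*y^2)"
        using n1 d0 by (intro divide_right_mono) auto
      also have "\<dots> \<le> (5*\<zeta>/3)/y"
      proof -
        have "(5*\<zeta>/3)/y * (2*r*y^2) = (10/3)*(\<zeta>*(r*y))" using ypos by (simp add: power2_eq_square field_simps)
        moreover have "t*(2*y + t) \<le> (10/3)*(\<zeta>*(r*y))" using n2 by linarith
        ultimately show ?thesis using d0 by (simp only: pos_divide_le_eq)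
      qed
      finally show ?thesis .
    qed
    thus ?thesis unfolding Thd_def by simp
  qed
  define K where "K = kerK m r t \<eta> \<xi>"
  define W where "W = w y"
  define Wd where "Wd = w' y"
  have Kpos: "K > 0" unfolding K_def kerK_def using ypos(1) ab unfolding yt a_def[symmetric] b_def[symmetric]
    by (simp add: a_def b_def)
  have Wpos: "W > 0" unfolding W_def using w_pos ypos by simp
  have dKt: "((\<lambda>\<tau>. kerK m r \<tau> \<eta> \<xi>) has_real_derivative K*Bk) (at t)"
  proof -
    note d = dK[of m "\<lambda>\<tau>. r + \<tau>*\<eta> - 2*\<tau>*\<eta>*\<xi>", OF _ dY dA dB]
    have "((\<lambda>\<tau>. kerK m r \<tau> \<eta> \<xi>) has_real_derivative
       kerK m r t \<eta> \<xi> * (real m * yd / y - ((\<eta> - \<eta>*\<xi>)/a + (- \<xi>*\<eta>)/b)/2)) (at t)"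
      unfolding kerK_def yd_def
      using d m ypos(1) ab unfolding yt a_def b_def by simp
    thus ?thesis unfolding K_def Bk_def .
  qed
  have dW: "((\<lambda>\<tau>. w (r + \<tau>*\<eta> - 2*\<tau>*\<eta>*\<xi>)) has_real_derivative Wd*yd) (at t)"
    unfolding Wd_def yd_def
    using DERIV_chain2[OF w_deriv[of "r + t*\<eta> - 2*t*\<eta>*\<xi>"] dY] ypos(1) unfolding yt by simp
  have dT: "((\<lambda>\<tau>. chebT (m - 1) (Theta r \<tau> \<eta> \<xi>)) has_real_derivative Td*Thd) (at t)"
    unfolding chebT_def Td_def chebT'_def Thd_def
    by (rule DERIV_chain2[OF poly_DERIV dTh])
  note dF = DERIV_mult[OF DERIV_mult[OF dKt dW] dT]
  define D where "D = (K * Bk * W + Wd * yd * K) * Tv + Td * Thd * (K * W)"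
  have dF': "((\<lambda>\<tau>. kerK m r \<tau> \<eta> \<xi> * w (r + \<tau>*\<eta> - 2*\<tau>*\<eta>*\<xi>) * chebT (m - 1) (Theta r \<tau> \<eta> \<xi>))
              has_real_derivative D) (at t)"
    using dF unfolding D_def K_def W_def Tv_def yt by simp
  have DK: "D = K*(W*(Tv*Bk) + Wd*yd*Tv + W*(Td*Thd))" unfolding D_def by (simp add: algebra_simps)
  have h2: "Wd*yd*Tv \<ge> - \<bar>Wd\<bar>"
  proof -
    have "\<bar>yd\<bar> \<le> 1" "\<bar>Tv\<bar> \<le> 1" using ydb T by auto
    hence "\<bar>yd*Tv\<bar> \<le> 1" unfolding abs_mult by (intro mult_le_one) auto
    hence "\<bar>Wd*(yd*Tv)\<bar> \<le> \<bar>Wd\<bar>" by (simp add: abs_mult mult_left_le)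
    thus ?thesis by (simp add: mult.assoc)
  qed
  have h3: "Td*Thd \<ge> - ((real m - 1)^2 * (5*\<zeta>/3))/y"
  proof -
    have "Td*Thd \<ge> Td*(-(5*\<zeta>/3)/y)" using Thdb T by (intro mult_left_mono) auto
    moreover have "Td*((5*\<zeta>/3)/y) \<le> (real m - 1)^2 * ((5*\<zeta>/3)/y)"
      using T \<zeta> ypos by (intro mult_right_mono) auto
    ultimately show ?thesis by simp
  qed
  have h1: "W*(Tv*Bk) \<ge> - (real m * W / y)" using mult_left_mono[OF TB, of W] Wpos by (simp add: mult.commute)
  have h3': "W*(Td*Thd) \<ge> - (((real m - 1)^2 * (5*\<zeta>/3)) * W / y)" using mult_left_mono[OF h3, of W] Wpos by (simp add: mult.commute)
  have Eeq: "E_const m \<zeta> * W / y = real m * W / y + 1/8 * W / y + ((real m - 1)^2 * (5*\<zeta>/3)) * W / y"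
    unfolding E_const_def using ypos(1) by (simp add: field_simps)
  have "1/8 * W / y \<ge> 0" using Wpos ypos by simp
  hence inner: "W*(Tv*Bk) + Wd*yd*Tv + W*(Td*Thd) \<ge> - (E_const m \<zeta> * W / y + \<bar>Wd\<bar>)"
    using h1 h2 h3' Eeq by linarith
  have "D \<ge> - (E_const m \<zeta> * W / y + \<bar>Wd\<bar>) * K"
    unfolding DK using mult_right_mono[OF inner, of K] Kpos by (simp add: mult.commute)
  thus ?thesis using dF' unfolding W_def Wd_def K_def yt by blast
qed

end
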